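(* Let $B$, $C$, $\phi$, $\psi$ and the skew brace $A=(B\times C,\cdot,\circ)$ be as in the construction below. Then $A$ is meta-trivial if and only if \[ \psi_{\phi_{c_1}(b_1)b_1^{-1}}\big(\psi_{b_2}(c_2)c_2^{-1}\big) = \psi_{b_2}(c_2)c_2^{-1} \] for all $b_1,b_2\in B$ and $c_1,c_2\in C$.
   Context: Construction: $B$, $C$ are groups with $C$ abelian; $\phi: C\to\mathrm{Aut}(B)$, $c\mapsto\phi_c$, and $\psi: B\to\mathrm{Aut}(C)$, $b\mapsto\psi_b$, are homomorphisms with $\phi_{\psi_b(c)}=\phi_c$ for all $b\in B,c\in C$. The set $A=B\times C$ carries the operations $(b_1,c_1)\cdot(b_2,c_2) = (b_1\phi_{c_1}(b_2), c_1c_2)$ and $(b_1,c_1)\circ(b_2,c_2) = (b_1b_2, c_1\psi_{b_1}(c_2))$, which make it a skew brace (a set with two group operations satisfying $a\circ(b\cdot c)=(a\circ b)\cdot a^{-1}\cdot(a\circ c)$, $a^{-1}$ the inverse in $(A,\cdot)$). Define $a*b = a^{-1}\cdot(a\circ b)\cdot b^{-1}$ and let $A'$ be the subgroup of $(A,\cdot)$ generated by all $a*b$, $a,b\in A$. $A$ is meta-trivial if $A'$ is a trivial skew brace, i.e. $x\circ y = x\cdot y$ for all $x,y\in A'$. *)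

theory Defs
  imports "HOL-Algebra.Algebra"
begin

definition aut_action :: "('c, 'm) monoid_scheme \<Rightarrow> ('b, 'n) monoid_scheme \<Rightarrow> ('c \<Rightarrow> 'b \<Rightarrow> 'b) \<Rightarrow> bool" where
  "aut_action C B phi \<longleftrightarrow>
     (\<forall>c\<in>carrier C. phi c \<in> iso B B) \<and>
     (\<forall>c1\<in>carrier C. \<forall>c2\<in>carrier C. \<forall>b\<in>carrier B.
        phi (c1 \<otimes>\<^bsub>C\<^esub> c2) b = phi c1 (phi c2 b))"

definition dot_grp :: "('b, 'm) monoid_scheme \<Rightarrow> ('c, 'n) monoid_scheme \<Rightarrow> ('c \<Rightarrow> 'b \<Rightarrow> 'b) \<Rightarrow> ('b \<times> 'c) monoid" where
  "dot_grp B C phi = \<lparr> carrier = carrier B \<times> carrier C,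
      Group.monoid.mult = (\<lambda>(b1, c1) (b2, c2). (b1 \<otimes>\<^bsub>B\<^esub> phi c1 b2, c1 \<otimes>\<^bsub>C\<^esub> c2)),
      one = (\<one>\<^bsub>B\<^esub>, \<one>\<^bsub>C\<^esub>) \<rparr>"

definition circ_grp :: "('b, 'm) monoid_scheme \<Rightarrow> ('c, 'n) monoid_scheme \<Rightarrow> ('b \<Rightarrow> 'c \<Rightarrow> 'c) \<Rightarrow> ('b \<times> 'c) monoid" where
  "circ_grp B C psi = \<lparr> carrier = carrier B \<times> carrier C,
      Group.monoid.mult = (\<lambda>(b1, c1) (b2, c2). (b1 \<otimes>\<^bsub>B\<^esub> b2, c1 \<otimes>\<^bsub>C\<^esub> psi b1 c2)),
      one = (\<one>\<^bsub>B\<^esub>, \<one>\<^bsub>C\<^esub>) \<rparr>"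

definition brace_star :: "('b, 'm) monoid_scheme \<Rightarrow> ('c, 'n) monoid_scheme \<Rightarrow> ('c \<Rightarrow> 'b \<Rightarrow> 'b) \<Rightarrow> ('b \<Rightarrow> 'c \<Rightarrow> 'c)
    \<Rightarrow> 'b \<times> 'c \<Rightarrow> 'b \<times> 'c \<Rightarrow> 'b \<times> 'c" where
  "brace_star B C phi psi a b =
     inv\<^bsub>dot_grp B C phi\<^esub> a \<otimes>\<^bsub>dot_grp B C phi\<^esub> (a \<otimes>\<^bsub>circ_grp B C psi\<^esub> b)
       \<otimes>\<^bsub>dot_grp B C phi\<^esub> inv\<^bsub>dot_grp B C phi\<^esub> b"

definition brace_commutator :: "('b, 'm) monoid_scheme \<Rightarrow> ('c, 'n) monoid_scheme \<Rightarrow> ('c \<Rightarrow> 'b \<Rightarrow> 'b) \<Rightarrow> ('b \<Rightarrow> 'c \<Rightarrow> 'c)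
    \<Rightarrow> ('b \<times> 'c) set" where
  "brace_commutator B C phi psi =
     generate (dot_grp B C phi)
       {brace_star B C phi psi a b | a b. a \<in> carrier B \<times> carrier C \<and> b \<in> carrier B \<times> carrier C}"

text \<open>Meta-trivial: A' is a trivial skew brace, i.e. x \<circ> y = x \<cdot> y on A'.\<close>
definition meta_trivial :: "('b, 'm) monoid_scheme \<Rightarrow> ('c, 'n) monoid_scheme \<Rightarrow> ('c \<Rightarrow> 'b \<Rightarrow> 'b) \<Rightarrow> ('b \<Rightarrow> 'c \<Rightarrow> 'c) \<Rightarrow> bool" where
  "meta_trivial B C phi psi \<longleftrightarrow>
     (\<forall>x\<in>brace_commutator B C phi psi. \<forall>y\<in>brace_commutator B C phi psi.
        x \<otimes>\<^bsub>circ_grp B C psi\<^esub> y = x \<otimes>\<^bsub>dot_grp B C phi\<^esub> y)"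

end

theory Submission
  imports Defs
begin

locale bsetup =
  B: group B + C: comm_group C
  for B :: "('b, 'm) monoid_scheme" and C :: "('c, 'n) monoid_scheme" +
  fixes phi :: "'c \<Rightarrow> 'b \<Rightarrow> 'b" and psi :: "'b \<Rightarrow> 'c \<Rightarrow> 'c"
  assumes aphi: "aut_action C B phi" and apsi: "aut_action B C psi"
    and compat: "\<And>b c x. b \<in> carrier B \<Longrightarrow> c \<in> carrier C \<Longrightarrow> x \<in> carrier B \<Longrightarrow> phi (psi b c) x = phi c x"
begin

lemma phi_hom: "c \<in> carrier C \<Longrightarrow> phi c \<in> hom B B"
  using aphi unfolding aut_action_def iso_def by auto
lemma psi_hom: "b \<in> carrier B \<Longrightarrow> psi b \<in> hom C C"
  using apsi unfolding aut_action_def iso_def by auto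
lemma phi_inj: "c \<in> carrier C \<Longrightarrow> inj_on (phi c) (carrier B)"
  using aphi unfolding aut_action_def iso_def bij_betw_def by auto
lemma psi_inj: "b \<in> carrier B \<Longrightarrow> inj_on (psi b) (carrier C)"
  using apsi unfolding aut_action_def iso_def bij_betw_def by auto
lemma phi_comp: "c1 \<in> carrier C \<Longrightarrow> c2 \<in> carrier C \<Longrightarrow> b \<in> carrier B \<Longrightarrow>
   phi (c1 \<otimes>\<^bsub>C\<^esub> c2) b = phi c1 (phi c2 b)"
  using aphi unfolding aut_action_def by auto
lemma psi_comp: "b1 \<in> carrier B \<Longrightarrow> b2 \<in> carrier B \<Longrightarrow> c \<in> carrier C \<Longrightarrow>
   psi (b1 \<otimes>\<^bsub>B\<^esub> b2) c = psi b1 (psi b2 c)"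
  using apsi unfolding aut_action_def by auto

lemma phi_car[simp]: "c \<in> carrier C \<Longrightarrow> b \<in> carrier B \<Longrightarrow> phi c b \<in> carrier B"
  by (rule hom_in_carrier[OF phi_hom])
lemma psi_car[simp]: "b \<in> carrier B \<Longrightarrow> c \<in> carrier C \<Longrightarrow> psi b c \<in> carrier C"
  by (rule hom_in_carrier[OF psi_hom])
lemma phi_mult: "c \<in> carrier C \<Longrightarrow> x \<in> carrier B \<Longrightarrow> y \<in> carrier B \<Longrightarrow>
   phi c (x \<otimes>\<^bsub>B\<^esub> y) = phi c x \<otimes>\<^bsub>B\<^esub> phi c y"
  by (rule hom_mult[OF phi_hom])
lemma psi_mult: "b \<in> carrier B \<Longrightarrow> x \<in> carrier C \<Longrightarrow> y \<in> carrier C \<Longrightarrow>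
   psi b (x \<otimes>\<^bsub>C\<^esub> y) = psi b x \<otimes>\<^bsub>C\<^esub> psi b y"
  by (rule hom_mult[OF psi_hom])
lemma phi_one[simp]: "c \<in> carrier C \<Longrightarrow> phi c \<one>\<^bsub>B\<^esub> = \<one>\<^bsub>B\<^esub>"
  by (rule hom_one[OF phi_hom B.group_axioms B.group_axioms])
lemma psi_one[simp]: "b \<in> carrier B \<Longrightarrow> psi b \<one>\<^bsub>C\<^esub> = \<one>\<^bsub>C\<^esub>"
  by (rule hom_one[OF psi_hom C.group_axioms C.group_axioms])
lemma phi_inv: "c \<in> carrier C \<Longrightarrow> x \<in> carrier B \<Longrightarrow> phi c (inv\<^bsub>B\<^esub> x) = inv\<^bsub>B\<^esub> phi c x"
  by (rule group_hom.hom_inv) (simp_all add: group_hom_def group_hom_axioms_def phi_hom B.group_axioms)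
lemma psi_inv: "b \<in> carrier B \<Longrightarrow> x \<in> carrier C \<Longrightarrow> psi b (inv\<^bsub>C\<^esub> x) = inv\<^bsub>C\<^esub> psi b x"
  by (rule group_hom.hom_inv) (simp_all add: group_hom_def group_hom_axioms_def psi_hom C.group_axioms)
lemma phi_id[simp]: "b \<in> carrier B \<Longrightarrow> phi \<one>\<^bsub>C\<^esub> b = b"
proof -
  assume b: "b \<in> carrier B"
  have "phi \<one>\<^bsub>C\<^esub> (phi \<one>\<^bsub>C\<^esub> b) = phi \<one>\<^bsub>C\<^esub> b"
    using phi_comp[of "\<one>\<^bsub>C\<^esub>" "\<one>\<^bsub>C\<^esub>" b] b by simp
  then show ?thesis using phi_inj[of "\<one>\<^bsub>C\<^esub>"] b by (simp add: inj_on_def)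
qed
lemma psi_id[simp]: "c \<in> carrier C \<Longrightarrow> psi \<one>\<^bsub>B\<^esub> c = c"
proof -
  assume c: "c \<in> carrier C"
  have "psi \<one>\<^bsub>B\<^esub> (psi \<one>\<^bsub>B\<^esub> c) = psi \<one>\<^bsub>B\<^esub> c"
    using psi_comp[of "\<one>\<^bsub>B\<^esub>" "\<one>\<^bsub>B\<^esub>" c] c by simp
  then show ?thesis using psi_inj[of "\<one>\<^bsub>B\<^esub>"] c by (simp add: inj_on_def)
qed
lemma phi_cancel[simp]: "c \<in> carrier C \<Longrightarrow> b \<in> carrier B \<Longrightarrow> phi c (phi (inv\<^bsub>C\<^esub> c) b) = b"
  by (metis phi_comp C.inv_closed C.r_inv phi_id)
lemma phi_cancel2[simp]: "c \<in> carrier C \<Longrightarrow> b \<in> carrier B \<Longrightarrow> phi (inv\<^bsub>C\<^esub> c) (phi c b) = b"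
  by (metis phi_comp C.inv_closed C.l_inv phi_id)
lemma psi_cancel2[simp]: "b \<in> carrier B \<Longrightarrow> c \<in> carrier C \<Longrightarrow> psi (inv\<^bsub>B\<^esub> b) (psi b c) = c"
  by (metis psi_comp B.inv_closed B.l_inv psi_id)

abbreviation "D \<equiv> dot_grp B C phi"
abbreviation "Cg \<equiv> circ_grp B C psi"

lemma D_mult: "(b1, c1) \<otimes>\<^bsub>D\<^esub> (b2, c2) = (b1 \<otimes>\<^bsub>B\<^esub> phi c1 b2, c1 \<otimes>\<^bsub>C\<^esub> c2)"
  by (simp add: dot_grp_def)
lemma Cg_mult: "(b1, c1) \<otimes>\<^bsub>Cg\<^esub> (b2, c2) = (b1 \<otimes>\<^bsub>B\<^esub> b2, c1 \<otimes>\<^bsub>C\<^esub> psi b1 c2)"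
  by (simp add: circ_grp_def)

lemma D_group: "group D"
proof (rule groupI)
  fix x y assume "x \<in> carrier D" "y \<in> carrier D"
  then show "x \<otimes>\<^bsub>D\<^esub> y \<in> carrier D" by (auto simp: dot_grp_def)
next
  show "\<one>\<^bsub>D\<^esub> \<in> carrier D" by (auto simp: dot_grp_def)
next
  fix x y z assume "x \<in> carrier D" "y \<in> carrier D" "z \<in> carrier D"
  then obtain b1 c1 b2 c2 b3 c3 where x: "x = (b1,c1)" "y = (b2,c2)" "z = (b3,c3)"
    and m: "b1 \<in> carrier B" "b2 \<in> carrier B" "b3 \<in> carrier B"
       "c1 \<in> carrier C" "c2 \<in> carrier C" "c3 \<in> carrier C"
    by (auto simp: dot_grp_def)
  have "phi c1 (b2 \<otimes>\<^bsub>B\<^esub> phi c2 b3) = phi c1 b2 \<otimes>\<^bsub>B\<^esub> phi (c1 \<otimes>\<^bsub>C\<^esub> c2) b3"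
    using m by (simp add: phi_mult phi_comp)
  then show "x \<otimes>\<^bsub>D\<^esub> y \<otimes>\<^bsub>D\<^esub> z = x \<otimes>\<^bsub>D\<^esub> (y \<otimes>\<^bsub>D\<^esub> z)"
    using m unfolding x D_mult by (simp add: B.m_assoc C.m_assoc)
next
  fix x assume "x \<in> carrier D"
  then show "\<one>\<^bsub>D\<^esub> \<otimes>\<^bsub>D\<^esub> x = x" by (auto simp: dot_grp_def)
next
  fix x assume "x \<in> carrier D"
  then obtain b c where x: "x = (b, c)" "b \<in> carrier B" "c \<in> carrier C" by (auto simp: dot_grp_def)
  show "\<exists>y\<in>carrier D. y \<otimes>\<^bsub>D\<^esub> x = \<one>\<^bsub>D\<^esub>"
  proof (rule bexI[of _ "(phi (inv\<^bsub>C\<^esub> c) (inv\<^bsub>B\<^esub> b), inv\<^bsub>C\<^esub> c)"])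
    have "phi (inv\<^bsub>C\<^esub> c) (inv\<^bsub>B\<^esub> b) \<otimes>\<^bsub>B\<^esub> phi (inv\<^bsub>C\<^esub> c) b = \<one>\<^bsub>B\<^esub>"
      using x by (simp add: phi_mult[symmetric])
    then show "(phi (inv\<^bsub>C\<^esub> c) (inv\<^bsub>B\<^esub> b), inv\<^bsub>C\<^esub> c) \<otimes>\<^bsub>D\<^esub> x = \<one>\<^bsub>D\<^esub>"
      using x by (simp add: D_mult) (simp add: dot_grp_def)
    show "(phi (inv\<^bsub>C\<^esub> c) (inv\<^bsub>B\<^esub> b), inv\<^bsub>C\<^esub> c) \<in> carrier D"
      using x by (simp add: dot_grp_def)
  qed
qed

lemma D_inv: "b \<in> carrier B \<Longrightarrow> c \<in> carrier C \<Longrightarrow>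
   inv\<^bsub>D\<^esub> (b, c) = (phi (inv\<^bsub>C\<^esub> c) (inv\<^bsub>B\<^esub> b), inv\<^bsub>C\<^esub> c)"
proof (rule group.inv_equality[OF D_group])
  assume x: "b \<in> carrier B" "c \<in> carrier C"
  have "phi (inv\<^bsub>C\<^esub> c) (inv\<^bsub>B\<^esub> b) \<otimes>\<^bsub>B\<^esub> phi (inv\<^bsub>C\<^esub> c) b = \<one>\<^bsub>B\<^esub>"
    using x by (simp add: phi_mult[symmetric])
  then show "(phi (inv\<^bsub>C\<^esub> c) (inv\<^bsub>B\<^esub> b), inv\<^bsub>C\<^esub> c) \<otimes>\<^bsub>D\<^esub> (b,c) = \<one>\<^bsub>D\<^esub>"
    using x by (simp add: D_mult) (simp add: dot_grp_def)
  show "(phi (inv\<^bsub>C\<^esub> c) (inv\<^bsub>B\<^esub> b), inv\<^bsub>C\<^esub> c) \<in> carrier D" "(b,c) \<in> carrier D"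
    using x by (simp_all add: dot_grp_def)
qed

lemma star_formula: "b1 \<in> carrier B \<Longrightarrow> c1 \<in> carrier C \<Longrightarrow> b2 \<in> carrier B \<Longrightarrow> c2 \<in> carrier C \<Longrightarrow>
  brace_star B C phi psi (b1, c1) (b2, c2) =
   (phi (inv\<^bsub>C\<^esub> c1) b2 \<otimes>\<^bsub>B\<^esub> inv\<^bsub>B\<^esub> b2, psi b1 c2 \<otimes>\<^bsub>C\<^esub> inv\<^bsub>C\<^esub> c2)"
proof -
  assume m: "b1 \<in> carrier B" "c1 \<in> carrier C" "b2 \<in> carrier B" "c2 \<in> carrier C"
  let ?p = "psi b1 c2"
  have p: "?p \<in> carrier C" using m by simp
  have e1: "inv\<^bsub>D\<^esub> (b1, c1) \<otimes>\<^bsub>D\<^esub> ((b1, c1) \<otimes>\<^bsub>Cg\<^esub> (b2, c2)) = (phi (inv\<^bsub>C\<^esub> c1) b2, ?p)"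
  proof -
    have "phi (inv\<^bsub>C\<^esub> c1) (inv\<^bsub>B\<^esub> b1) \<otimes>\<^bsub>B\<^esub> phi (inv\<^bsub>C\<^esub> c1) (b1 \<otimes>\<^bsub>B\<^esub> b2)
        = phi (inv\<^bsub>C\<^esub> c1) (inv\<^bsub>B\<^esub> b1 \<otimes>\<^bsub>B\<^esub> (b1 \<otimes>\<^bsub>B\<^esub> b2))"
      using m by (simp add: phi_mult)
    also have "inv\<^bsub>B\<^esub> b1 \<otimes>\<^bsub>B\<^esub> (b1 \<otimes>\<^bsub>B\<^esub> b2) = b2"
      using m by (simp add: B.m_assoc[symmetric])
    finally have 1: "phi (inv\<^bsub>C\<^esub> c1) (inv\<^bsub>B\<^esub> b1) \<otimes>\<^bsub>B\<^esub> phi (inv\<^bsub>C\<^esub> c1) (b1 \<otimes>\<^bsub>B\<^esub> b2)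
        = phi (inv\<^bsub>C\<^esub> c1) b2" .
    have 2: "inv\<^bsub>C\<^esub> c1 \<otimes>\<^bsub>C\<^esub> (c1 \<otimes>\<^bsub>C\<^esub> ?p) = ?p"
      using m p by (simp add: C.m_assoc[symmetric])
    show ?thesis using m 1 2 by (simp add: D_inv Cg_mult D_mult)
  qed
  have e2: "(phi (inv\<^bsub>C\<^esub> c1) b2, ?p) \<otimes>\<^bsub>D\<^esub> inv\<^bsub>D\<^esub> (b2, c2)
      = (phi (inv\<^bsub>C\<^esub> c1) b2 \<otimes>\<^bsub>B\<^esub> inv\<^bsub>B\<^esub> b2, ?p \<otimes>\<^bsub>C\<^esub> inv\<^bsub>C\<^esub> c2)"
  proof -
    have "phi ?p (phi (inv\<^bsub>C\<^esub> c2) (inv\<^bsub>B\<^esub> b2)) = phi c2 (phi (inv\<^bsub>C\<^esub> c2) (inv\<^bsub>B\<^esub> b2))"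
      using m by (simp add: compat)
    also have "\<dots> = inv\<^bsub>B\<^esub> b2" using m by simp
    finally show ?thesis using m by (simp add: D_inv D_mult)
  qed
  show ?thesis unfolding brace_star_def using e1 e2 by simp
qed


lemma backward:
  assumes H: "\<forall>b1\<in>carrier B. \<forall>b2\<in>carrier B. \<forall>c1\<in>carrier C. \<forall>c2\<in>carrier C.
       psi (phi c1 b1 \<otimes>\<^bsub>B\<^esub> inv\<^bsub>B\<^esub> b1) (psi b2 c2 \<otimes>\<^bsub>C\<^esub> inv\<^bsub>C\<^esub> c2)
         = psi b2 c2 \<otimes>\<^bsub>C\<^esub> inv\<^bsub>C\<^esub> c2"
  shows "meta_trivial B C phi psi"
proof -
  define Xs where "Xs = {z. \<exists>c b. z = phi c b \<otimes>\<^bsub>B\<^esub> inv\<^bsub>B\<^esub> b \<and> c \<in> carrier C \<and> b \<in> carrier B}"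
  define Z where "Z = {c \<in> carrier C. \<forall>x\<in>Xs. psi x c = c}"
  define W where "W = {b \<in> carrier B. \<forall>c\<in>Z. psi b c = c}"
  define K where "K = {c \<in> carrier C. \<forall>b\<in>carrier B. phi c b = b}"
  define S where "S = W \<times> (Z \<inter> K)"
  have XB: "Xs \<subseteq> carrier B" unfolding Xs_def by auto
  have SD: "subgroup S D"
  proof (rule group.subgroupI[OF D_group])
    show "S \<subseteq> carrier D" unfolding S_def W_def Z_def dot_grp_def by auto
    have "\<one>\<^bsub>B\<^esub> \<in> W" unfolding W_def Z_def by auto
    moreover have "\<one>\<^bsub>C\<^esub> \<in> Z" unfolding Z_def using XB by auto
    moreover have "\<one>\<^bsub>C\<^esub> \<in> K" unfolding K_def by auto
    ultimately show "S \<noteq> {}" unfolding S_def by auto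
  next
    fix a assume "a \<in> S"
    then obtain b c where a: "a = (b,c)" "b \<in> W" "c \<in> Z" "c \<in> K" unfolding S_def by auto
    have b: "b \<in> carrier B" and c: "c \<in> carrier C" using a unfolding W_def Z_def by auto
    have "inv\<^bsub>D\<^esub> a = (phi (inv\<^bsub>C\<^esub> c) (inv\<^bsub>B\<^esub> b), inv\<^bsub>C\<^esub> c)" using a b c by (simp add: D_inv)
    moreover have "phi (inv\<^bsub>C\<^esub> c) (inv\<^bsub>B\<^esub> b) = inv\<^bsub>B\<^esub> b"
    proof -
      have e: "phi c (inv\<^bsub>B\<^esub> b) = inv\<^bsub>B\<^esub> b" using a(4) b unfolding K_def by auto
      show ?thesis using phi_cancel2[of c "inv\<^bsub>B\<^esub> b"] e b c by simp
    qed
    moreover have "inv\<^bsub>B\<^esub> b \<in> W" unfolding W_def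
    proof (safe)
      show "inv\<^bsub>B\<^esub> b \<in> carrier B" using b by simp
      fix z assume z: "z \<in> Z"
      then have "psi b z = z" using a(2) unfolding W_def by auto
      then show "psi (inv\<^bsub>B\<^esub> b) z = z" using psi_cancel2[of b z] b z unfolding Z_def by auto
    qed
    moreover have "inv\<^bsub>C\<^esub> c \<in> Z" using a(3) XB unfolding Z_def by (auto simp: psi_inv subset_iff)
    moreover have "inv\<^bsub>C\<^esub> c \<in> K" unfolding K_def
    proof (safe)
      show "inv\<^bsub>C\<^esub> c \<in> carrier C" using c by simp
      fix x assume x: "x \<in> carrier B"
      have "phi c x = x" using a(4) x unfolding K_def by auto
      then show "phi (inv\<^bsub>C\<^esub> c) x = x" using phi_cancel2[of c x] c x by auto
    qed
    ultimately show "inv\<^bsub>D\<^esub> a \<in> S" unfolding S_def by auto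
  next
    fix a a' assume "a \<in> S" "a' \<in> S"
    then obtain b c b' c' where a: "a = (b,c)" "b \<in> W" "c \<in> Z" "c \<in> K"
      and a': "a' = (b',c')" "b' \<in> W" "c' \<in> Z" "c' \<in> K" unfolding S_def by auto
    have b: "b \<in> carrier B" "b' \<in> carrier B" and c: "c \<in> carrier C" "c' \<in> carrier C"
      using a a' unfolding W_def Z_def by auto
    have "a \<otimes>\<^bsub>D\<^esub> a' = (b \<otimes>\<^bsub>B\<^esub> b', c \<otimes>\<^bsub>C\<^esub> c')"
      using a a' b unfolding K_def by (simp add: D_mult)
    moreover have "b \<otimes>\<^bsub>B\<^esub> b' \<in> W" using a a' b unfolding W_def Z_def
      by (auto simp: psi_comp)
    moreover have "c \<otimes>\<^bsub>C\<^esub> c' \<in> Z" using a a' c XB unfolding Z_def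
      by (auto simp: psi_mult subset_iff)
    moreover have "c \<otimes>\<^bsub>C\<^esub> c' \<in> K" using a a' c unfolding K_def
      by (auto simp: phi_comp)
    ultimately show "a \<otimes>\<^bsub>D\<^esub> a' \<in> S" unfolding S_def by auto
  qed
  have gen1: "brace_star B C phi psi (b1, c1) (b2, c2) \<in> S"
    if m: "b1 \<in> carrier B" "c1 \<in> carrier C" "b2 \<in> carrier B" "c2 \<in> carrier C" for b1 c1 b2 c2
  proof -
    have "phi (inv\<^bsub>C\<^esub> c1) b2 \<otimes>\<^bsub>B\<^esub> inv\<^bsub>B\<^esub> b2 \<in> Xs" unfolding Xs_def using m by auto
    moreover have "psi b1 c2 \<otimes>\<^bsub>C\<^esub> inv\<^bsub>C\<^esub> c2 \<in> Z" unfolding Z_def Xs_def using m H by auto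
    moreover have "psi b1 c2 \<otimes>\<^bsub>C\<^esub> inv\<^bsub>C\<^esub> c2 \<in> K" unfolding K_def
    proof (safe)
      show "psi b1 c2 \<otimes>\<^bsub>C\<^esub> inv\<^bsub>C\<^esub> c2 \<in> carrier C" using m by simp
      fix x assume x: "x \<in> carrier B"
      show "phi (psi b1 c2 \<otimes>\<^bsub>C\<^esub> inv\<^bsub>C\<^esub> c2) x = x"
        using m x by (simp add: phi_comp compat)
    qed
    moreover have "Xs \<subseteq> W" unfolding W_def Z_def using XB by auto
    ultimately show ?thesis
      using m by (auto simp: star_formula S_def)
  qed
  have gen: "{brace_star B C phi psi a b | a b. a \<in> carrier B \<times> carrier C \<and> b \<in> carrier B \<times> carrier C} \<subseteq> S"
    using gen1 by auto
  have AS: "brace_commutator B C phi psi \<subseteq> S"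
    unfolding brace_commutator_def
    by (rule group.generate_subgroup_incl[OF D_group gen SD])
  show ?thesis unfolding meta_trivial_def
  proof (intro ballI)
    fix x y assume "x \<in> brace_commutator B C phi psi" "y \<in> brace_commutator B C phi psi"
    then have "x \<in> S" "y \<in> S" using AS by auto
    then obtain b c b' c' where a: "x = (b,c)" "b \<in> W" "c \<in> Z" "c \<in> K"
      and a': "y = (b',c')" "b' \<in> W" "c' \<in> Z" "c' \<in> K" unfolding S_def by auto
    have "phi c b' = b'" "psi b c' = c'" using a a' unfolding K_def W_def by auto
    then show "x \<otimes>\<^bsub>Cg\<^esub> y = x \<otimes>\<^bsub>D\<^esub> y" using a a' by (simp add: D_mult Cg_mult)
  qed
qed

lemma forward:
  assumes MT: "meta_trivial B C phi psi"
  shows "\<forall>b1\<in>carrier B. \<forall>b2\<in>carrier B. \<forall>c1\<in>carrier C. \<forall>c2\<in>carrier C.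
       psi (phi c1 b1 \<otimes>\<^bsub>B\<^esub> inv\<^bsub>B\<^esub> b1) (psi b2 c2 \<otimes>\<^bsub>C\<^esub> inv\<^bsub>C\<^esub> c2)
         = psi b2 c2 \<otimes>\<^bsub>C\<^esub> inv\<^bsub>C\<^esub> c2"
proof (intro ballI)
  fix b1 b2 c1 c2 assume m: "b1 \<in> carrier B" "b2 \<in> carrier B" "c1 \<in> carrier C" "c2 \<in> carrier C"
  let ?x1 = "phi c1 b1 \<otimes>\<^bsub>B\<^esub> inv\<^bsub>B\<^esub> b1" and ?y2 = "psi b2 c2 \<otimes>\<^bsub>C\<^esub> inv\<^bsub>C\<^esub> c2"
  have x1: "?x1 \<in> carrier B" and y2: "?y2 \<in> carrier C" using m by auto
  have "brace_star B C phi psi (\<one>\<^bsub>B\<^esub>, inv\<^bsub>C\<^esub> c1) (b1, \<one>\<^bsub>C\<^esub>) = (?x1, \<one>\<^bsub>C\<^esub>)"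
    using m by (simp add: star_formula)
  then have xA: "(?x1, \<one>\<^bsub>C\<^esub>) \<in> brace_commutator B C phi psi"
    unfolding brace_commutator_def using m
    by (metis (mono_tags, lifting) B.one_closed C.inv_closed C.one_closed SigmaI generate.incl mem_Collect_eq)
  have "brace_star B C phi psi (b2, \<one>\<^bsub>C\<^esub>) (\<one>\<^bsub>B\<^esub>, c2) = (\<one>\<^bsub>B\<^esub>, ?y2)"
    using m by (simp add: star_formula)
  then have yA: "(\<one>\<^bsub>B\<^esub>, ?y2) \<in> brace_commutator B C phi psi"
    unfolding brace_commutator_def using m
    by (metis (mono_tags, lifting) B.one_closed C.one_closed SigmaI generate.incl mem_Collect_eq)
  have "(?x1, \<one>\<^bsub>C\<^esub>) \<otimes>\<^bsub>Cg\<^esub> (\<one>\<^bsub>B\<^esub>, ?y2) = (?x1, \<one>\<^bsub>C\<^esub>) \<otimes>\<^bsub>D\<^esub> (\<one>\<^bsub>B\<^esub>, ?y2)"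
    using MT xA yA unfolding meta_trivial_def by blast
  then show "psi ?x1 ?y2 = ?y2" using x1 y2 by (simp add: D_mult Cg_mult)
qed

end

theorem proposition8p4:
  fixes B :: "('b, 'm) monoid_scheme" and C :: "('c, 'n) monoid_scheme"
    and phi :: "'c \<Rightarrow> 'b \<Rightarrow> 'b" and psi :: "'b \<Rightarrow> 'c \<Rightarrow> 'c"
  assumes "group B" and "comm_group C"
    and "aut_action C B phi" and "aut_action B C psi"
    and "\<And>b c x. b \<in> carrier B \<Longrightarrow> c \<in> carrier C \<Longrightarrow> x \<in> carrier B \<Longrightarrow> phi (psi b c) x = phi c x"
  shows "meta_trivial B C phi psi \<longleftrightarrow>
    (\<forall>b1\<in>carrier B. \<forall>b2\<in>carrier B. \<forall>c1\<in>carrier C. \<forall>c2\<in>carrier C.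
       psi (phi c1 b1 \<otimes>\<^bsub>B\<^esub> inv\<^bsub>B\<^esub> b1) (psi b2 c2 \<otimes>\<^bsub>C\<^esub> inv\<^bsub>C\<^esub> c2)
         = psi b2 c2 \<otimes>\<^bsub>C\<^esub> inv\<^bsub>C\<^esub> c2)"
proof -
  interpret bsetup B C phi psi
    using assms by (simp add: bsetup_def bsetup_axioms_def)
  show ?thesis using forward backward by blast
qed

end
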